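(* Let $G$ be an infinite vertex-transitive graph of finite degree, let $K\subset V(G)$ be finite, let $y\in K$, and let $\sigma=(\tilde\eta^o_0,\tilde\eta^w_0)$ be an unstable particle configuration. Then for the ghost-pair stabilization of $K$ started from $\sigma$, \[ \tilde E_{K,\sigma}\bigl(\tilde m(y)\bigr)=\sum_{x\in K}\bigl(\tilde\eta^o_0(x)\wedge\tilde\eta^w_0(x)\bigr)\,G_K(x,y). \]
   Context: A particle configuration $(\eta^o,\eta^w)\in\mathbb{N}^{V(G)}\times\mathbb{N}^{V(G)}$ gives the numbers of oils and waters at each vertex; $x$ is stable if $\eta^o(x)\wedge\eta^w(x)=0$, and $\eta^o(x)\wedge\eta^w(x)$ is the number of (oil-water) pairs at $x$; $x$ is a hole if $\eta^o(x)=\eta^w(x)$. Ghost-pair stabilization of $K$: states are triples $(\tilde\eta^o,\tilde\eta^w,\tilde\eta^g)$, the last coordinate counting auxiliary particles called ghosts. Start with oils and waters as in $\sigma$ and no ghosts. At each step $t=0,1,2,\dots$: (i) either one ghost located at a vertex of $K$ makes one simple random walk step, or one oil-water pair at a vertex $b\in K$ (i.e. $b$ has at least one oil and one water) moves, meaning one oil and one water at $b$ each independently jump to a uniformly chosen neighbor of $b$; the choice of which ghost or pair moves is arbitrary (may depend on the past); (ii) if in (i) a water jumped into a vertex $x\in K$ which was a hole just before this step and after the step $x$ has exactly one more water than oils, a new ghost is created at $x$. Ghosts do not interact with oils, waters, or each other. The procedure stops at the first time $T$ at which $K$ is stable for oils and waters and no ghost is in $K$ ($T$ is a.s. finite). $\tilde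 m(y)$ is the total number of times that a ghost or an oil-water pair jumps from $y$, and $\tilde P_{K,\sigma},\tilde E_{K,\sigma}$ denote the law and expectation of this procedure. $G_K(x,y)=E_x\bigl[\sum_{t=0}^{\tau_{K^c}}\mathbf{1}\{X(t)=y\}\bigr]$, where $X$ is simple random walk on $G$ started at $x$ and $\tau_{K^c}=\inf\{t\ge0:X(t)\notin K\}$. *)

theory Defs
  imports "HOL-Probability.Probability"
begin

text \<open>A graph is given by a symmetric irreflexive adjacency relation on the
vertex type 'v (the vertex set is the whole type).\<close>

definition nbrs :: "('v \<Rightarrow> 'v \<Rightarrow> bool) \<Rightarrow> 'v \<Rightarrow> 'v set" where
  "nbrs adj v = {w. adj v w}"

definition graph_automorphism :: "('v \<Rightarrow> 'v \<Rightarrow> bool) \<Rightarrow> ('v \<Rightarrow> 'v) \<Rightarrow> bool" where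
  "graph_automorphism adj f \<longleftrightarrow> bij f \<and> (\<forall>a b. adj a b \<longleftrightarrow> adj (f a) (f b))"

definition infinite_vt_graph_finite_degree :: "('v \<Rightarrow> 'v \<Rightarrow> bool) \<Rightarrow> bool" where
  "infinite_vt_graph_finite_degree adj \<longleftrightarrow>
     (\<forall>a b. adj a b \<longrightarrow> adj b a) \<and>
     (\<forall>a. \<not> adj a a) \<and>
     (\<forall>a b. adj\<^sup>*\<^sup>* a b) \<and>
     infinite (UNIV :: 'v set) \<and>
     (\<forall>v. finite (nbrs adj v)) \<and>
     (\<forall>u v. \<exists>f. graph_automorphism adj f \<and> f u = v)"

definition unstable_config :: "('v \<Rightarrow> nat) \<Rightarrow> ('v \<Rightarrow> nat) \<Rightarrow> bool" where
  "unstable_config eo ew \<longleftrightarrow> (\<exists>x. min (eo x) (ew x) > 0)"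

text \<open>Distribution of the path (X(0),...,X(n)) of simple random walk from x.\<close>
fun srw_path :: "('v \<Rightarrow> 'v \<Rightarrow> bool) \<Rightarrow> 'v \<Rightarrow> nat \<Rightarrow> 'v list pmf" where
  "srw_path adj x 0 = return_pmf [x]"
| "srw_path adj x (Suc n) =
     srw_path adj x n \<bind> (\<lambda>p. map_pmf (\<lambda>z. p @ [z]) (pmf_of_set (nbrs adj (last p))))"

text \<open>Number of times t \<le> min(n, tau) with X(t) = y, where tau is the exit time of K
  (t \<le> tau iff X(s) \<in> K for all s < t).\<close>
definition visits_before_exit :: "'v set \<Rightarrow> 'v \<Rightarrow> 'v list \<Rightarrow> nat" where
  "visits_before_exit K y p =
     card {t. t < length p \<and> (\<forall>s<t. p ! s \<in> K) \<and> p ! t = y}"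

text \<open>G_K(x,y) = E_x[sum_{t=0}^{tau} 1{X(t)=y}], computed by monotone convergence
  as the supremum over the horizon n of the truncated expectations.\<close>
definition greenK :: "('v \<Rightarrow> 'v \<Rightarrow> bool) \<Rightarrow> 'v set \<Rightarrow> 'v \<Rightarrow> 'v \<Rightarrow> ennreal" where
  "greenK adj K x y =
     (SUP n. \<integral>\<^sup>+ p. of_nat (visits_before_exit K y p) \<partial>measure_pmf (srw_path adj x n))"

text \<open>A state is (oils, waters, ghosts).\<close>
type_synonym 'v gstate = "('v \<Rightarrow> nat) \<times> ('v \<Rightarrow> nat) \<times> ('v \<Rightarrow> nat)"

datatype 'v gmove = GhostMove 'v | PairMove 'v

fun gmove_loc :: "'v gmove \<Rightarrow> 'v" where
  "gmove_loc (GhostMove b) = b"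
| "gmove_loc (PairMove b) = b"

definition move1 :: "('v \<Rightarrow> nat) \<Rightarrow> 'v \<Rightarrow> 'v \<Rightarrow> ('v \<Rightarrow> nat)" where
  "move1 f a c = (\<lambda>x. f x - (if x = a then 1 else 0) + (if x = c then 1 else 0))"

definition gterminal :: "'v set \<Rightarrow> 'v gstate \<Rightarrow> bool" where
  "gterminal K s \<longleftrightarrow>
     (case s of (eo, ew, eg) \<Rightarrow> (\<forall>x\<in>K. min (eo x) (ew x) = 0) \<and> (\<forall>x\<in>K. eg x = 0))"

fun gvalid :: "'v set \<Rightarrow> 'v gstate \<Rightarrow> 'v gmove \<Rightarrow> bool" where
  "gvalid K (eo, ew, eg) (GhostMove b) \<longleftrightarrow> b \<in> K \<and> eg b > 0"
| "gvalid K (eo, ew, eg) (PairMove b) \<longleftrightarrow> b \<in> K \<and> eo b > 0 \<and> ew b > 0"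

fun gstep :: "('v \<Rightarrow> 'v \<Rightarrow> bool) \<Rightarrow> 'v set \<Rightarrow> 'v gstate \<Rightarrow> 'v gmove \<Rightarrow> 'v gstate pmf" where
  "gstep adj K (eo, ew, eg) (GhostMove b) =
     map_pmf (\<lambda>z. (eo, ew, move1 eg b z)) (pmf_of_set (nbrs adj b))"
| "gstep adj K (eo, ew, eg) (PairMove b) =
     map_pmf (\<lambda>(z1, z2).
        let eo' = move1 eo b z1; ew' = move1 ew b z2 in
        (eo', ew',
         if z2 \<in> K \<and> eo z2 = ew z2 \<and> ew' z2 = eo' z2 + 1
         then eg(z2 := eg z2 + 1) else eg))
       (pair_pmf (pmf_of_set (nbrs adj b)) (pmf_of_set (nbrs adj b)))"

text \<open>A (deterministic, history dependent) choice rule: given the history of states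
  s_0,...,s_t, it chooses which ghost (by location) or which pair moves.\<close>
definition admissible_strategy :: "'v set \<Rightarrow> ('v gstate list \<Rightarrow> 'v gmove) \<Rightarrow> bool" where
  "admissible_strategy K strat \<longleftrightarrow>
     (\<forall>ss. ss \<noteq> [] \<longrightarrow> \<not> gterminal K (last ss) \<longrightarrow> gvalid K (last ss) (strat ss))"

text \<open>Law of the history (states s_0..s_{min(n,T)}, moves made) up to time n;
  the procedure is frozen once it has stopped.\<close>
fun ghost_run :: "('v \<Rightarrow> 'v \<Rightarrow> bool) \<Rightarrow> 'v set \<Rightarrow> ('v gstate list \<Rightarrow> 'v gmove) \<Rightarrow>
                  'v gstate \<Rightarrow> nat \<Rightarrow> ('v gstate list \<times> 'v gmove list) pmf" where
  "ghost_run adj K strat s0 0 = return_pmf ([s0], [])"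
| "ghost_run adj K strat s0 (Suc n) =
     ghost_run adj K strat s0 n \<bind> (\<lambda>(ss, ms).
       if gterminal K (last ss) then return_pmf (ss, ms)
       else map_pmf (\<lambda>s'. (ss @ [s'], ms @ [strat ss])) (gstep adj K (last ss) (strat ss)))"

definition jumps_from :: "'v \<Rightarrow> 'v gmove list \<Rightarrow> nat" where
  "jumps_from y ms = length (filter (\<lambda>mv. gmove_loc mv = y) ms)"

text \<open>E_{K,sigma}(m(y)), via monotone convergence as a supremum over horizons n.\<close>
definition ghost_expected_jumps ::
  "('v \<Rightarrow> 'v \<Rightarrow> bool) \<Rightarrow> 'v set \<Rightarrow> ('v gstate list \<Rightarrow> 'v gmove) \<Rightarrow>
   ('v \<Rightarrow> nat) \<Rightarrow> ('v \<Rightarrow> nat) \<Rightarrow> 'v \<Rightarrow> ennreal" where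
  "ghost_expected_jumps adj K strat eo ew y =
     (SUP n. \<integral>\<^sup>+ h. of_nat (jumps_from y (snd h))
        \<partial>measure_pmf (ghost_run adj K strat (eo, ew, (\<lambda>_. 0)) n))"

end

theory Submission
  imports Defs
begin


locale sgraph =
  fixes adj :: "'v \<Rightarrow> 'v \<Rightarrow> bool"
  assumes fin: "\<And>v. finite (nbrs adj v)"
    and ne: "\<And>v. nbrs adj v \<noteq> {}"
    and irr: "\<And>v. \<not> adj v v"
begin

lemma srw_nonempty: "p \<in> set_pmf (srw_path adj x n) \<Longrightarrow> p \<noteq> []"
  by (induction n arbitrary: p) (auto simp: fin ne)

lemma srw_first:
  "srw_path adj x (Suc n) =
     pmf_of_set (nbrs adj x) \<bind> (\<lambda>z. map_pmf ((#) x) (srw_path adj z n))"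
proof (induction n arbitrary: x)
  case 0
  then show ?case by (simp add: bind_return_pmf map_pmf_def)
next
  case (Suc n)
  have "srw_path adj x (Suc (Suc n)) = srw_path adj x (Suc n) \<bind>
     (\<lambda>p. map_pmf (\<lambda>z. p @ [z]) (pmf_of_set (nbrs adj (last p))))" by simp
  also have "\<dots> = pmf_of_set (nbrs adj x) \<bind> (\<lambda>z. map_pmf ((#) x) (srw_path adj z n) \<bind>
     (\<lambda>p. map_pmf (\<lambda>z. p @ [z]) (pmf_of_set (nbrs adj (last p)))))"
    by (subst Suc) (simp only: bind_assoc_pmf)
  also have "\<dots> = pmf_of_set (nbrs adj x) \<bind> (\<lambda>z. map_pmf ((#) x) (srw_path adj z (Suc n)))"
  proof (rule bind_pmf_cong[OF refl])
    fix z
    show "map_pmf ((#) x) (srw_path adj z n) \<bind>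
     (\<lambda>p. map_pmf (\<lambda>z. p @ [z]) (pmf_of_set (nbrs adj (last p)))) =
      map_pmf ((#) x) (srw_path adj z (Suc n))"
      unfolding bind_map_pmf
      by (simp add: map_bind_pmf pmf.map_comp o_def cong: bind_pmf_cong)
        (rule bind_pmf_cong, auto dest: srw_nonempty)
  qed
  finally show ?case .
qed

end


lemma visits_Cons:
  assumes "y \<in> K"
  shows "visits_before_exit K y (x#p) =
    (if x \<in> K then (if x = y then 1 else 0) + visits_before_exit K y p else 0)"
proof (cases "x \<in> K")
  case True
  let ?S' = "{t. t < length p \<and> (\<forall>s<t. p ! s \<in> K) \<and> p ! t = y}"
  have eq: "{t. t < length (x#p) \<and> (\<forall>s<t. (x#p) ! s \<in> K) \<and> (x#p) ! t = y}
      = (if x = y then {0} else {}) \<union> Suc ` ?S'"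
  proof (rule set_eqI)
    fix t show "t \<in> {t. t < length (x#p) \<and> (\<forall>s<t. (x#p) ! s \<in> K) \<and> (x#p) ! t = y} \<longleftrightarrow>
      t \<in> (if x = y then {0} else {}) \<union> Suc ` ?S'"
      using True by (cases t) (auto simp: All_less_Suc2)
  qed
  have "finite ?S'" by simp
  then show ?thesis using True unfolding visits_before_exit_def eq
    by (subst card_Un_disjoint) (auto simp: card_image)
next
  case False
  have "{t. t < length (x#p) \<and> (\<forall>s<t. (x#p) ! s \<in> K) \<and> (x#p) ! t = y} = {}"
  proof -
    { fix t assume t: "t < length (x#p)" "\<forall>s<t. (x#p) ! s \<in> K" "(x#p) ! t = y"
      have False using t False assms by (cases t) auto }
    then show ?thesis by blast
  qed
  then show ?thesis using False unfolding visits_before_exit_def by simp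
qed

lemma visits_Nil: "visits_before_exit K y [] = 0"
  by (simp add: visits_before_exit_def)

context sgraph begin

definition avgN :: "('v \<Rightarrow> ennreal) \<Rightarrow> 'v \<Rightarrow> ennreal" where
  "avgN f x = (\<integral>\<^sup>+z. f z \<partial>measure_pmf (pmf_of_set (nbrs adj x)))"

definition TK :: "'v set \<Rightarrow> ('v \<Rightarrow> ennreal) \<Rightarrow> 'v \<Rightarrow> ennreal" where
  "TK K f x = (if x \<in> K then avgN f x else 0)"

definition gtr :: "'v set \<Rightarrow> 'v \<Rightarrow> nat \<Rightarrow> 'v \<Rightarrow> ennreal" where
  "gtr K y n x = (\<integral>\<^sup>+p. of_nat (visits_before_exit K y p) \<partial>measure_pmf (srw_path adj x n))"

lemma avgN_const: "avgN (\<lambda>_. c) x = c"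
  by (simp add: avgN_def fin ne measure_pmf.emeasure_space_1)

lemma avgN_add: "avgN (\<lambda>z. f z + g z) x = avgN f x + avgN g x"
  unfolding avgN_def by (rule nn_integral_add) auto

lemma avgN_cmult: "avgN (\<lambda>z. c * f z) x = c * avgN f x"
  unfolding avgN_def by (rule nn_integral_cmult) auto

lemma avgN_mono: "(\<And>z. f z \<le> g z) \<Longrightarrow> avgN f x \<le> avgN g x"
  unfolding avgN_def by (rule nn_integral_mono) auto

lemma avgN_sum: "finite I \<Longrightarrow> avgN (\<lambda>z. \<Sum>i\<in>I. f i z) x = (\<Sum>i\<in>I. avgN (f i) x)"
  unfolding avgN_def by (rule nn_integral_sum) auto

lemma avgN_eq: "avgN f x = sum f (nbrs adj x) / of_nat (card (nbrs adj x))"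
  unfolding avgN_def by (subst nn_integral_pmf_of_set) (auto simp: fin ne)

lemma gtr_0: "y \<in> K \<Longrightarrow> gtr K y 0 x = (if x = y then 1 else 0)"
  unfolding gtr_def using visits_Cons[of y K x "[]"] by (auto simp: visits_Nil)

lemma gtr_Suc: "y \<in> K \<Longrightarrow> gtr K y (Suc n) x =
   (if x \<in> K then (if x = y then 1 else 0) + avgN (gtr K y n) x else 0)"
proof -
  assume y: "y \<in> K"
  have "gtr K y (Suc n) x = (\<integral>\<^sup>+z. \<integral>\<^sup>+p. of_nat (visits_before_exit K y (x#p)) \<partial>measure_pmf (srw_path adj z n)
     \<partial>measure_pmf (pmf_of_set (nbrs adj x)))"
    unfolding gtr_def srw_first by simp
  also have "\<dots> = (if x \<in> K then (if x = y then 1 else 0) + avgN (gtr K y n) x else 0)"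
  proof (cases "x \<in> K")
    case True
    have "(\<integral>\<^sup>+z. \<integral>\<^sup>+p. of_nat (visits_before_exit K y (x#p)) \<partial>measure_pmf (srw_path adj z n)
     \<partial>measure_pmf (pmf_of_set (nbrs adj x))) = (\<integral>\<^sup>+z. (if x = y then 1 else 0) + gtr K y n z
     \<partial>measure_pmf (pmf_of_set (nbrs adj x)))"
      unfolding gtr_def visits_Cons[OF y] using True
      by (intro nn_integral_cong) (simp add: nn_integral_add measure_pmf.emeasure_space_1)
    also have "\<dots> = (if x = y then 1 else 0) + avgN (gtr K y n) x"
      by (subst nn_integral_add) (auto simp: avgN_def fin ne measure_pmf.emeasure_space_1)
    finally show ?thesis using True by simp
  next
    case False
    then show ?thesis unfolding visits_Cons[OF y] by simp
  qed
  finally show ?thesis .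
qed

end


lemma SUP_shift_incseq:
  fixes f :: "nat \<Rightarrow> 'a::complete_lattice"
  assumes "\<And>n. f n \<le> f (Suc n)"
  shows "(SUP n. f (Suc n)) = (SUP n. f n)"
proof (rule antisym)
  show "(SUP n. f (Suc n)) \<le> (SUP n. f n)" by (rule SUP_mono) auto
  show "(SUP n. f n) \<le> (SUP n. f (Suc n))"
    by (rule SUP_mono) (use assms in auto)
qed

context sgraph begin

lemma gtr_mono_Suc: "y \<in> K \<Longrightarrow> gtr K y n x \<le> gtr K y (Suc n) x"
proof (induction n arbitrary: x)
  case 0
  then show ?case by (auto simp: gtr_0 gtr_Suc)
next
  case (Suc n)
  then show ?case
    by (subst (1 2) gtr_Suc) (auto intro: add_left_mono avgN_mono)
qed

lemma gtr_incseq: "y \<in> K \<Longrightarrow> incseq (\<lambda>n. gtr K y n)"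
  by (rule incseq_SucI) (auto simp: le_fun_def gtr_mono_Suc)

lemma greenK_SUP: "greenK adj K x y = (SUP n. gtr K y n x)"
  unfolding greenK_def gtr_def by simp

lemma green_rec:
  assumes y: "y \<in> K"
  shows "greenK adj K x y = (if x \<in> K then (if x = y then 1 else 0) + avgN (\<lambda>z. greenK adj K z y) x else 0)"
proof -
  have "greenK adj K x y = (SUP n. gtr K y (Suc n) x)"
    unfolding greenK_SUP by (rule SUP_shift_incseq[symmetric]) (rule gtr_mono_Suc[OF y])
  also have "\<dots> = (SUP n. (if x \<in> K then (if x = y then 1 else 0) + avgN (gtr K y n) x else 0))"
    by (simp add: gtr_Suc[OF y])
  also have "\<dots> = (if x \<in> K then (if x = y then 1 else 0) + avgN (\<lambda>z. greenK adj K z y) x else 0)"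
  proof (cases "x \<in> K")
    case True
    have "(SUP n. avgN (gtr K y n) x) = avgN (\<lambda>z. greenK adj K z y) x"
      unfolding avgN_def greenK_SUP
      by (rule nn_integral_monotone_convergence_SUP[symmetric]) (auto intro: gtr_incseq[OF y])
    then show ?thesis using True
      by (simp add: ennreal_SUP_add_right[symmetric])
  qed simp
  finally show ?thesis .
qed

lemma green_out: "y \<in> K \<Longrightarrow> x \<notin> K \<Longrightarrow> greenK adj K x y = 0"
  by (subst green_rec) auto

end


lemma real_step_ineq:
  fixes d :: real and c :: nat
  assumes "0 \<le> d" "d \<le> 1 / c" "1 \<le> c"
  shows "(1 - d^j + (real c - 1)) / real c \<le> 1 - d^(Suc j)"
proof -
  have c: "real c > 0" using assms by simp
  have "d^(Suc j) \<le> d^j / c"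
  proof -
    have "d^(Suc j) = d^j * d" by simp
    also have "\<dots> \<le> d^j * (1/c)" using assms by (intro mult_left_mono) auto
    finally show ?thesis by simp
  qed
  moreover have "(1 - d^j + (real c - 1)) / real c = 1 - d^j / c"
    using c by (simp add: field_simps)
  ultimately show ?thesis by simp
qed

context sgraph begin

lemma TK_mono: "(\<And>z. f z \<le> g z) \<Longrightarrow> TK K f x \<le> TK K g x"
  by (auto simp: TK_def intro: avgN_mono)

lemma TK_cmult: "TK K (\<lambda>z. c * f z) x = c * TK K f x"
  by (auto simp: TK_def avgN_cmult)

lemma TK_add_const: "TK K (\<lambda>z. c + f z) x \<le> c + TK K f x"
  by (auto simp: TK_def avgN_add avgN_const)

definition surv :: "'v set \<Rightarrow> nat \<Rightarrow> 'v \<Rightarrow> ennreal" where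
  "surv K k = (TK K ^^ k) (\<lambda>_. 1)"

lemma surv_Suc: "surv K (Suc k) x = TK K (surv K k) x"
  by (simp add: surv_def)

lemma surv_le1: "surv K k x \<le> 1"
proof (induction k arbitrary: x)
  case 0 then show ?case by (simp add: surv_def)
next
  case (Suc k)
  have "TK K (surv K k) x \<le> TK K (\<lambda>_. 1) x" by (rule TK_mono) (rule Suc)
  also have "\<dots> \<le> 1" by (simp add: TK_def avgN_const)
  finally show ?case by (simp add: surv_Suc)
qed

lemma surv_out: "x \<notin> K \<Longrightarrow> surv K (Suc k) x = 0"
  by (simp add: surv_Suc TK_def)

lemma TKpow_le: "(\<And>z. g z \<le> c) \<Longrightarrow> (TK K ^^ j) g x \<le> c * surv K j x"
proof (induction j arbitrary: x)
  case 0 then show ?case by (simp add: surv_def)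
next
  case (Suc j)
  have "(TK K ^^ Suc j) g x = TK K ((TK K ^^ j) g) x" by simp
  also have "\<dots> \<le> TK K (\<lambda>z. c * surv K j z) x" by (rule TK_mono) (rule Suc.IH, rule Suc.prems)
  also have "\<dots> = c * surv K (Suc j) x" by (simp add: TK_cmult surv_Suc)
  finally show ?case .
qed

lemma gtr_le_1: "y \<in> K \<Longrightarrow> gtr K y (Suc n) x \<le> 1 + TK K (gtr K y n) x"
  by (subst gtr_Suc) (auto simp: TK_def intro: add_right_mono)

lemma gtr_shift: "y \<in> K \<Longrightarrow> gtr K y (n + j) x \<le> of_nat j + (TK K ^^ j) (gtr K y n) x"
proof (induction j arbitrary: x)
  case 0 then show ?case by simp
next
  case (Suc j)
  have "gtr K y (n + Suc j) x \<le> 1 + TK K (gtr K y (n + j)) x"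
    using gtr_le_1[OF Suc.prems] by simp
  also have "\<dots> \<le> 1 + TK K (\<lambda>z. of_nat j + (TK K ^^ j) (gtr K y n) z) x"
    by (intro add_left_mono TK_mono Suc.IH Suc.prems)
  also have "\<dots> \<le> 1 + (of_nat j + TK K ((TK K ^^ j) (gtr K y n)) x)"
    by (intro add_left_mono TK_add_const)
  also have "\<dots> = of_nat (Suc j) + (TK K ^^ Suc j) (gtr K y n) x"
    by (simp add: add.assoc)
  finally show ?case .
qed

definition Pj :: "'v set \<Rightarrow> real \<Rightarrow> nat \<Rightarrow> 'v \<Rightarrow> bool" where
  "Pj K d j x \<longleftrightarrow> (\<forall>k>j. surv K k x \<le> ennreal (1 - d^j))"

lemma Pj_out: "x \<notin> K \<Longrightarrow> Pj K d 0 x"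
  unfolding Pj_def by (auto simp: surv_out gr0_conv_Suc)

lemma Pj_mono: "0 \<le> d \<Longrightarrow> d \<le> 1 \<Longrightarrow> j \<le> j' \<Longrightarrow> Pj K d j x \<Longrightarrow> Pj K d j' x"
  unfolding Pj_def
proof (intro allI impI)
  fix k assume d: "0 \<le> d" "d \<le> 1" and jj: "j \<le> j'" and P: "\<forall>k>j. surv K k x \<le> ennreal (1 - d ^ j)"
    and k: "j' < k"
  have "d^j' \<le> d^j" using d jj by (simp add: power_decreasing)
  then have "ennreal (1 - d^j) \<le> ennreal (1 - d^j')" by (intro ennreal_leI) simp
  then show "surv K k x \<le> ennreal (1 - d ^ j')" using P k jj by (meson le_less_trans order_trans)
qed

lemma Pj_step:
  assumes x: "x \<in> K" and a: "adj x x'" and P: "Pj K d j x'"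
    and d: "0 \<le> d" "d \<le> 1 / card (nbrs adj x)"
  shows "Pj K d (Suc j) x"
  unfolding Pj_def
proof (intro allI impI)
  fix k assume "Suc j < k"
  then obtain k' where k: "k = Suc k'" "j < k'" by (cases k) auto
  let ?N = "nbrs adj x"
  have x'N: "x' \<in> ?N" using a by (simp add: nbrs_def)
  have c1: "1 \<le> card ?N" using fin ne by (simp add: Suc_le_eq card_gt_0_iff)
  have "sum (surv K k') ?N = surv K k' x' + sum (surv K k') (?N - {x'})"
    using x'N fin by (simp add: sum.remove)
  also have "\<dots> \<le> ennreal (1 - d^j) + sum (\<lambda>_. 1) (?N - {x'})"
    using P k unfolding Pj_def by (intro add_mono sum_mono surv_le1) auto
  also have "\<dots> = ennreal (1 - d^j + (real (card ?N) - 1))"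
  proof -
    have "d^j \<le> 1" using d c1 by (simp add: power_le_one order_trans[OF _ divide_le_eq_1[THEN iffD2]])
    moreover have "real (card (?N - {x'})) = real (card ?N) - 1"
      using x'N fin c1 by (simp add: card_Diff_singleton of_nat_diff)
    ultimately show ?thesis
      by (simp add: ennreal_plus[symmetric] ennreal_of_nat_eq_real_of_nat)
  qed
  finally have S: "sum (surv K k') ?N \<le> ennreal (1 - d^j + (real (card ?N) - 1))" .
  have "surv K k x = sum (surv K k') ?N / of_nat (card ?N)"
    using x k by (simp add: surv_Suc TK_def avgN_eq)
  also have "\<dots> \<le> ennreal (1 - d^j + (real (card ?N) - 1)) / ennreal (real (card ?N))"
    using S by (simp add: divide_right_mono_ennreal ennreal_of_nat_eq_real_of_nat)
  also have "\<dots> = ennreal ((1 - d^j + (real (card ?N) - 1)) / real (card ?N))"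
  proof (rule divide_ennreal)
    show "0 \<le> 1 - d^j + (real (card ?N) - 1)"
      using d c1 by (smt (verit) divide_le_eq_1 of_nat_1 of_nat_mono power_le_one)
  qed (use c1 in auto)
  also have "\<dots> \<le> ennreal (1 - d^(Suc j))"
    by (intro ennreal_leI real_step_ineq d c1)
  finally show "surv K k x \<le> ennreal (1 - d ^ Suc j)" .
qed

end


context sgraph begin

lemma gtr_bounded:
  assumes K: "finite K" and y: "y \<in> K" and conn: "\<And>a b. adj\<^sup>*\<^sup>* a b"
    and inf: "infinite (UNIV :: 'v set)"
  shows "\<exists>C. C < \<top> \<and> (\<forall>n x. gtr K y n x \<le> C)"
proof -
  define D where "D = Max (card ` nbrs adj ` K)"
  have cardD: "card (nbrs adj x) \<le> D" if "x \<in> K" for x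
    unfolding D_def using K that by (intro Max_ge) auto
  have c1: "1 \<le> card (nbrs adj x)" for x using fin ne by (simp add: Suc_le_eq card_gt_0_iff)
  have D1: "1 \<le> D" using cardD[OF y] c1[of y] by simp
  define d :: real where "d = 1 / D"
  have d0: "0 \<le> d" and d1: "d \<le> 1" using D1 by (auto simp: d_def)
  have dx: "d \<le> 1 / card (nbrs adj x)" if "x \<in> K" for x
    unfolding d_def using cardD[OF that] c1[of x] by (intro divide_left_mono) auto
  obtain w where w: "w \<notin> K" using ex_new_if_finite[OF inf K] by auto
  have exj: "\<exists>j. Pj K d j x" for x
  proof -
    have "adj\<^sup>*\<^sup>* x w" by (rule conn)
    then show ?thesis
    proof (induction rule: converse_rtranclp_induct)
      case base then show ?case using Pj_out[OF w] by blast
    next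
      case (step x x')
      then obtain j where j: "Pj K d j x'" by blast
      show ?case
      proof (cases "x \<in> K")
        case True
        then show ?thesis using Pj_step[OF True step(1) j d0 dx[OF True]] by blast
      next
        case False then show ?thesis using Pj_out by blast
      qed
    qed
  qed
  define L where "L = Max ((\<lambda>x. SOME j. Pj K d j x) ` K)"
  have PL: "Pj K d L x" for x
  proof (cases "x \<in> K")
    case True
    have P: "Pj K d (SOME j. Pj K d j x) x" using exj[of x] by (rule someI_ex)
    have "(SOME j. Pj K d j x) \<le> L" unfolding L_def using K True by (intro Max_ge) auto
    then show ?thesis using Pj_mono[OF d0 d1 _ P] by blast
  next
    case False
    then show ?thesis using Pj_mono[OF d0 d1 _ Pj_out[OF False]] by blast
  qed
  define p where "p = d^L"
  have p0: "0 < p" using D1 by (simp add: p_def d_def)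
  have p1: "p \<le> 1" using d0 d1 by (simp add: p_def power_le_one)
  define M where "M = Suc L"
  have survM: "surv K M x \<le> ennreal (1 - p)" for x
    using PL[of x] by (simp add: Pj_def M_def p_def)
  define C where "C = ennreal (real M / p)"
  have bound: "gtr K y n x \<le> C" for n x
  proof (induction n arbitrary: x rule: less_induct)
    case (less n)
    show ?case
    proof (cases "n < M")
      case True
      have g0: "gtr K y 0 z \<le> 1" for z by (simp add: gtr_0[OF y])
      have "gtr K y (0 + n) x \<le> of_nat n + (TK K ^^ n) (gtr K y 0) x" by (rule gtr_shift[OF y])
      also have "\<dots> \<le> of_nat n + 1 * surv K n x"
        by (intro add_left_mono TKpow_le g0)
      also have "\<dots> \<le> of_nat n + 1" using surv_le1 by (simp add: add_left_mono)
      also have "\<dots> = ennreal (real (Suc n))" by (simp add: ennreal_of_nat_eq_real_of_nat add.commute)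
      also have "\<dots> \<le> C" unfolding C_def
      proof (rule ennreal_leI)
        have "real (Suc n) \<le> real M" using True by simp
        also have "\<dots> \<le> real M / p" using p0 p1 by (simp add: le_divide_eq mult_left_le)
        finally show "real (Suc n) \<le> real M / p" .
      qed
      finally show ?thesis by simp
    next
      case False
      then obtain n' where n': "n = n' + M" by (metis add.commute le_Suc_ex not_less)
      have lt: "n' < n" using n' by (simp add: M_def)
      have "gtr K y (n' + M) x \<le> of_nat M + (TK K ^^ M) (gtr K y n') x" by (rule gtr_shift[OF y])
      also have "\<dots> \<le> of_nat M + C * surv K M x"
        by (intro add_left_mono TKpow_le less.IH lt)
      also have "\<dots> \<le> of_nat M + C * ennreal (1 - p)"
        by (intro add_left_mono mult_left_mono survM) auto
      also have "\<dots> = C"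
      proof -
        have "real M + real M / p * (1 - p) = real M / p" using p0 by (simp add: field_simps)
        then show ?thesis unfolding C_def using p0 p1
          by (simp add: ennreal_of_nat_eq_real_of_nat ennreal_mult[symmetric] ennreal_plus[symmetric])
      qed
      finally show ?thesis using n' by simp
    qed
  qed
  show ?thesis using bound unfolding C_def by (intro exI[of _ "ennreal (real M / p)"]) auto
qed

lemma green_finite:
  assumes K: "finite K" and y: "y \<in> K" and conn: "\<And>a b. adj\<^sup>*\<^sup>* a b"
    and inf: "infinite (UNIV :: 'v set)"
  shows "greenK adj K x y < \<top>"
proof -
  obtain C where C: "C < \<top>" "\<And>n x. gtr K y n x \<le> C" using gtr_bounded[OF assms] by blast
  have "greenK adj K x y \<le> C" unfolding greenK_SUP by (rule SUP_least) (rule C(2))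
  then show ?thesis using C(1) by (simp add: le_less_trans)
qed

end


fun ucnt :: "'v gstate \<Rightarrow> 'v \<Rightarrow> nat" where
  "ucnt (eo, ew, eg) x = min (eo x) (ew x) + eg x"

definition pot :: "'v set \<Rightarrow> ('v \<Rightarrow> ennreal) \<Rightarrow> 'v gstate \<Rightarrow> ennreal" where
  "pot K f s = (\<Sum>x\<in>K. of_nat (ucnt s x) * f x)"

definition Rpot :: "'v set \<Rightarrow> ('v \<Rightarrow> ennreal) \<Rightarrow> 'v gstate \<Rightarrow> 'v \<Rightarrow> ennreal" where
  "Rpot K f s b = (\<Sum>x\<in>K. of_nat (ucnt s x - (if x = b then 1 else 0)) * f x)"

lemma pot_split:
  assumes "finite K" "b \<in> K" "1 \<le> ucnt s b"
  shows "pot K f s = Rpot K f s b + f b"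
proof -
  have "pot K f s = of_nat (ucnt s b) * f b + (\<Sum>x\<in>K-{b}. of_nat (ucnt s x) * f x)"
    unfolding pot_def using assms by (simp add: sum.remove)
  moreover have "Rpot K f s b = of_nat (ucnt s b - 1) * f b + (\<Sum>x\<in>K-{b}. of_nat (ucnt s x) * f x)"
    unfolding Rpot_def using assms by (simp add: sum.remove)
  moreover have "of_nat (ucnt s b) * f b = of_nat (ucnt s b - 1) * f b + f b"
  proof -
    have "ucnt s b = Suc (ucnt s b - 1)" using assms by simp
    then have "(of_nat (ucnt s b) :: ennreal) = of_nat (ucnt s b - 1) + 1"
      by (metis of_nat_Suc add.commute)
    then show ?thesis by (simp add: distrib_right)
  qed
  ultimately show ?thesis by (simp add: ac_simps)
qed

lemma pot_shift:
  assumes "finite K" and fz: "\<And>x. x \<notin> K \<Longrightarrow> f x = 0"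
    and u: "\<And>x. x \<in> K \<Longrightarrow> ucnt s' x = (ucnt s x - (if x = b then 1 else 0))
        + (if x = z1 \<and> P1 then 1 else 0) + (if x = z2 \<and> P2 then 1 else 0)"
  shows "pot K f s' = Rpot K f s b + ((if P1 then f z1 else 0) + (if P2 then f z2 else 0))"
proof -
  have "pot K f s' = (\<Sum>x\<in>K. of_nat (ucnt s x - (if x = b then 1 else 0)) * f x
      + ((if x = z1 \<and> P1 then f x else 0) + (if x = z2 \<and> P2 then f x else 0)))"
    unfolding pot_def by (intro sum.cong refl) (simp add: u distrib_right)
  also have "\<dots> = Rpot K f s b + ((\<Sum>x\<in>K. if x = z1 \<and> P1 then f x else 0) + (\<Sum>x\<in>K. if x = z2 \<and> P2 then f x else 0))"
    unfolding Rpot_def by (simp add: sum.distrib)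
  also have "(\<Sum>x\<in>K. if x = z1 \<and> P1 then f x else 0) = (if P1 then f z1 else 0)"
    using assms(1) fz by (cases P1) (auto simp: sum.delta)
  also have "(\<Sum>x\<in>K. if x = z2 \<and> P2 then f x else 0) = (if P2 then f z2 else 0)"
    using assms(1) fz by (cases P2) (auto simp: sum.delta)
  finally show ?thesis .
qed

lemma ucnt_pair:
  fixes eo ew eg :: "'v \<Rightarrow> nat"
  assumes "eo b > 0" "ew b > 0" "z1 \<noteq> b" "z2 \<noteq> b" "x \<in> K"
  shows "ucnt (move1 eo b z1, move1 ew b z2,
         if z2 \<in> K \<and> eo z2 = ew z2 \<and> move1 ew b z2 z2 = move1 eo b z1 z2 + 1
         then eg(z2 := eg z2 + 1) else eg) x =
    (ucnt (eo, ew, eg) x - (if x = b then 1 else 0))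
        + (if x = z1 \<and> eo z1 < ew z1 then 1 else 0) + (if x = z2 \<and> ew z2 \<le> eo z2 then 1 else 0)"
proof -
  have m2: "move1 ew b z2 z2 = ew z2 + 1" using assms by (simp add: move1_def)
  have m1: "move1 eo b z1 z2 = eo z2 + (if z1 = z2 then 1 else 0)" using assms by (simp add: move1_def)
  have c: "(z2 \<in> K \<and> eo z2 = ew z2 \<and> move1 ew b z2 z2 = move1 eo b z1 z2 + 1) = (z2 \<in> K \<and> eo z2 = ew z2 \<and> z1 \<noteq> z2)"
    unfolding m1 m2 by auto
  have o: "move1 eo b z1 x = eo x - (if x = b then 1 else 0) + (if x = z1 then 1 else 0)"
    by (simp add: move1_def)
  have w: "move1 ew b z2 x = ew x - (if x = b then 1 else 0) + (if x = z2 then 1 else 0)"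
    by (simp add: move1_def)
  let ?g = "if z2 \<in> K \<and> eo z2 = ew z2 \<and> z1 \<noteq> z2 then eg(z2 := eg z2 + 1) else eg"
  have g: "?g x = eg x + (if x = z2 \<and> z2 \<in> K \<and> eo z2 = ew z2 \<and> z1 \<noteq> z2 then 1 else 0)"
    by (cases "x = z2") simp_all
  show ?thesis
    unfolding c ucnt.simps o w g
    using assms by (cases "x = b"; cases "x = z1"; cases "x = z2") (simp_all add: min_def)
qed

lemma ucnt_ghost:
  fixes eo ew eg :: "'v \<Rightarrow> nat"
  assumes "eg b > 0" "z \<noteq> b"
  shows "ucnt (eo, ew, move1 eg b z) x =
    (ucnt (eo, ew, eg) x - (if x = b then 1 else 0))
        + (if x = z \<and> True then 1 else 0) + (if x = z \<and> False then 1 else 0)"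
  using assms by (cases "x = b"; cases "x = z") (simp_all add: move1_def)



lemma pot_integrals:
  fixes \<nu> :: "'w pmf" and P :: "'s \<Rightarrow> ennreal"
  assumes eq: "\<And>\<omega>. \<omega> \<in> set_pmf \<nu> \<Longrightarrow> P (st \<omega>) = R + X \<omega>"
    and bd: "\<And>\<omega>. X \<omega> \<le> c" and A: "(\<integral>\<^sup>+\<omega>. X \<omega> \<partial>measure_pmf \<nu>) = A"
  shows "(\<integral>\<^sup>+s'. P s' \<partial>measure_pmf (map_pmf st \<nu>)) = R + A"
    and "(\<integral>\<^sup>+s'. (P s')^2 \<partial>measure_pmf (map_pmf st \<nu>)) \<le> R^2 + 2*R*A + c^2"
proof -
  have "(\<integral>\<^sup>+s'. P s' \<partial>measure_pmf (map_pmf st \<nu>)) = (\<integral>\<^sup>+\<omega>. R + X \<omega> \<partial>measure_pmf \<nu>)"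
    by simp (rule nn_integral_cong_AE, simp add: AE_measure_pmf_iff eq)
  also have "\<dots> = R + A" using A
    by (subst nn_integral_add) (auto simp: measure_pmf.emeasure_space_1)
  finally show "(\<integral>\<^sup>+s'. P s' \<partial>measure_pmf (map_pmf st \<nu>)) = R + A" .
  have "(\<integral>\<^sup>+s'. (P s')^2 \<partial>measure_pmf (map_pmf st \<nu>)) = (\<integral>\<^sup>+\<omega>. (R + X \<omega>)^2 \<partial>measure_pmf \<nu>)"
    by simp (rule nn_integral_cong_AE, simp add: AE_measure_pmf_iff eq)
  also have "\<dots> \<le> (\<integral>\<^sup>+\<omega>. R^2 + (2*R) * X \<omega> + c^2 \<partial>measure_pmf \<nu>)"
  proof (rule nn_integral_mono)
    fix \<omega>
    have "X \<omega> ^2 \<le> c^2" using bd by (intro power_mono) auto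
    then show "(R + X \<omega>)^2 \<le> R^2 + (2*R) * X \<omega> + c^2"
      by (simp add: power2_sum mult.assoc add_left_mono)
  qed
  also have "\<dots> = R^2 + 2*R*A + c^2" using A
    by (simp add: nn_integral_add nn_integral_cmult measure_pmf.emeasure_space_1)
  finally show "(\<integral>\<^sup>+s'. (P s')^2 \<partial>measure_pmf (map_pmf st \<nu>)) \<le> R^2 + 2*R*A + c^2" .
qed

context sgraph begin

lemma gstep_pot:
  assumes v: "gvalid K s mv" and K: "finite K" and fz: "\<And>x. x \<notin> K \<Longrightarrow> f x = 0"
    and fc: "\<And>x. f x \<le> c"
  shows "pot K f s = Rpot K f s (gmove_loc mv) + f (gmove_loc mv)"
    and "(\<integral>\<^sup>+s'. pot K f s' \<partial>measure_pmf (gstep adj K s mv)) =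
           Rpot K f s (gmove_loc mv) + avgN f (gmove_loc mv)"
    and "(\<integral>\<^sup>+s'. (pot K f s')^2 \<partial>measure_pmf (gstep adj K s mv)) \<le>
           (Rpot K f s (gmove_loc mv))^2 + 2 * Rpot K f s (gmove_loc mv) * avgN f (gmove_loc mv)
            + (2*c)^2"
proof -
  obtain eo ew eg where s: "s = (eo, ew, eg)" by (cases s) auto
  let ?b = "gmove_loc mv"
  let ?U = "pmf_of_set (nbrs adj ?b)"
  have nb: "z \<in> set_pmf ?U \<Longrightarrow> z \<noteq> ?b" for z
  proof -
    assume "z \<in> set_pmf ?U"
    then have "adj ?b z" using fin ne by (simp add: nbrs_def)
    then show ?thesis using irr by auto
  qed
  have ub: "1 \<le> ucnt s ?b" and bK: "?b \<in> K" using v by (cases mv; auto simp: s)+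
  show "pot K f s = Rpot K f s ?b + f ?b" by (rule pot_split[OF K bK ub])
  have "\<exists>\<nu> :: ('v \<times> 'v) pmf. \<exists>st X. gstep adj K s mv = map_pmf st \<nu> \<and>
     (\<forall>\<omega>\<in>set_pmf \<nu>. pot K f (st \<omega>) = Rpot K f s ?b + X \<omega>) \<and> (\<forall>\<omega>. X \<omega> \<le> 2*c) \<and>
     (\<integral>\<^sup>+\<omega>. X \<omega> \<partial>measure_pmf \<nu>) = avgN f ?b"
  proof (cases mv)
    case (GhostMove b)
    have egb: "eg b > 0" using v by (simp add: s GhostMove)
    let ?st = "\<lambda>(z1::'v, z2::'v). (eo, ew, move1 eg b z1)"
    have "map_pmf ?st (pair_pmf ?U ?U) = map_pmf (\<lambda>z. (eo, ew, move1 eg b z)) (map_pmf fst (pair_pmf ?U ?U))"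
      by (simp add: pmf.map_comp o_def) (rule pmf.map_cong, auto)
    then have "gstep adj K s mv = map_pmf ?st (pair_pmf ?U ?U)"
      by (simp add: s GhostMove map_fst_pair_pmf)
    moreover have "\<forall>\<omega>\<in>set_pmf (pair_pmf ?U ?U). pot K f (?st \<omega>) = Rpot K f s ?b + f (fst \<omega>)"
    proof
      fix \<omega> assume w: "\<omega> \<in> set_pmf (pair_pmf ?U ?U)"
      obtain z1 z2 where o: "\<omega> = (z1, z2)" by (cases \<omega>)
      have "z1 \<noteq> b" using w nb by (auto simp: o GhostMove)
      have "pot K f (eo, ew, move1 eg b z1) = Rpot K f s b + ((if True then f z1 else 0) + (if False then f z1 else 0))"
        unfolding s using K fz egb \<open>z1 \<noteq> b\<close> by (intro pot_shift ucnt_ghost)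
      then show "pot K f (?st \<omega>) = Rpot K f s ?b + f (fst \<omega>)" by (simp add: o GhostMove)
    qed
    moreover have "\<forall>\<omega>::'v\<times>'v. f (fst \<omega>) \<le> 2*c"
    proof
      fix \<omega> :: "'v \<times> 'v"
      have "f (fst \<omega>) \<le> c" by (rule fc)
      also have "c \<le> 2 * c" by (simp add: mult_2)
      finally show "f (fst \<omega>) \<le> 2*c" .
    qed
    moreover have "(\<integral>\<^sup>+\<omega>. f (fst \<omega>) \<partial>measure_pmf (pair_pmf ?U ?U)) = avgN f ?b"
      by (simp add: nn_integral_pair_pmf' avgN_def measure_pmf.emeasure_space_1)
    ultimately show ?thesis by - ((rule exI)+, (intro conjI; assumption))
  next
    case (PairMove b)
    have eob: "eo b > 0" and ewb: "ew b > 0" using v by (simp_all add: s PairMove)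
    let ?st = "\<lambda>(z1, z2).
        let eo' = move1 eo b z1; ew' = move1 ew b z2 in
        (eo', ew',
         if z2 \<in> K \<and> eo z2 = ew z2 \<and> ew' z2 = eo' z2 + 1
         then eg(z2 := eg z2 + 1) else eg)"
    let ?X = "\<lambda>(z1, z2). (if eo z1 < ew z1 then f z1 else 0) + (if ew z2 \<le> eo z2 then f z2 else 0)"
    have "gstep adj K s mv = map_pmf ?st (pair_pmf ?U ?U)"
      by (simp add: s PairMove)
    moreover have "\<forall>\<omega>\<in>set_pmf (pair_pmf ?U ?U). pot K f (?st \<omega>) = Rpot K f s ?b + ?X \<omega>"
    proof
      fix \<omega> assume w: "\<omega> \<in> set_pmf (pair_pmf ?U ?U)"
      obtain z1 z2 where o: "\<omega> = (z1, z2)" by (cases \<omega>)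
      have z1: "z1 \<noteq> b" and z2: "z2 \<noteq> b" using w nb by (auto simp: o PairMove)
      show "pot K f (?st \<omega>) = Rpot K f s ?b + ?X \<omega>"
        unfolding o PairMove gmove_loc.simps prod.case Let_def
        unfolding s using K fz eob ewb z1 z2 by (intro pot_shift ucnt_pair)
    qed
    moreover have "\<forall>\<omega>. ?X \<omega> \<le> 2*c"
    proof
      fix \<omega> :: "'v \<times> 'v"
      obtain z1 z2 where o: "\<omega> = (z1, z2)" by (cases \<omega>)
      have "?X \<omega> \<le> c + c" unfolding o prod.case by (intro add_mono) (auto intro: fc)
      then show "?X \<omega> \<le> 2*c" by (simp add: mult_2)
    qed
    moreover have "(\<integral>\<^sup>+\<omega>. ?X \<omega> \<partial>measure_pmf (pair_pmf ?U ?U)) = avgN f ?b"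
    proof -
      let ?g1 = "\<lambda>z. if eo z < ew z then f z else 0" and ?g2 = "\<lambda>z. if ew z \<le> eo z then f z else 0"
      have "(\<integral>\<^sup>+\<omega>. ?X \<omega> \<partial>measure_pmf (pair_pmf ?U ?U)) =
          (\<integral>\<^sup>+z1. ?g1 z1 + (\<integral>\<^sup>+z2. ?g2 z2 \<partial>measure_pmf ?U) \<partial>measure_pmf ?U)"
        by (simp add: nn_integral_pair_pmf' nn_integral_add measure_pmf.emeasure_space_1)
      also have "\<dots> = (\<integral>\<^sup>+z. ?g1 z \<partial>measure_pmf ?U) + (\<integral>\<^sup>+z. ?g2 z \<partial>measure_pmf ?U)"
        by (simp add: nn_integral_add measure_pmf.emeasure_space_1)
      also have "\<dots> = (\<integral>\<^sup>+z. ?g1 z + ?g2 z \<partial>measure_pmf ?U)"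
        by (simp add: nn_integral_add)
      also have "\<dots> = avgN f ?b" unfolding avgN_def
        by (rule nn_integral_cong) auto
      finally show ?thesis .
    qed
    ultimately show ?thesis by - ((rule exI)+, (intro conjI; assumption))
  qed
  then obtain \<nu> :: "('v \<times> 'v) pmf" and st X where
    g: "gstep adj K s mv = map_pmf st \<nu>" and
    e: "\<And>\<omega>. \<omega>\<in>set_pmf \<nu> \<Longrightarrow> pot K f (st \<omega>) = Rpot K f s ?b + X \<omega>" and
    bX: "\<And>\<omega>. X \<omega> \<le> 2*c" and iX: "(\<integral>\<^sup>+\<omega>. X \<omega> \<partial>measure_pmf \<nu>) = avgN f ?b"
    by blast
  show "(\<integral>\<^sup>+s'. pot K f s' \<partial>measure_pmf (gstep adj K s mv)) = Rpot K f s ?b + avgN f ?b"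
    unfolding g by (rule pot_integrals(1)[where P="pot K f", OF e bX iX])
  show "(\<integral>\<^sup>+s'. (pot K f s')^2 \<partial>measure_pmf (gstep adj K s mv)) \<le>
           (Rpot K f s ?b)^2 + 2 * Rpot K f s ?b * avgN f ?b + (2*c)^2"
    unfolding g by (rule pot_integrals(2)[where P="pot K f", OF e bX iX])
qed

end


lemma run_nonempty:
  "hh \<in> set_pmf (ghost_run adj K strat s0 n) \<Longrightarrow> fst hh \<noteq> []"
proof (induction n arbitrary: hh)
  case 0 then show ?case by simp
next
  case (Suc n)
  from Suc.prems obtain ss ms where h: "(ss, ms) \<in> set_pmf (ghost_run adj K strat s0 n)"
    and hh: "hh \<in> set_pmf (if gterminal K (last ss) then return_pmf (ss, ms)
       else map_pmf (\<lambda>s'. (ss @ [s'], ms @ [strat ss])) (gstep adj K (last ss) (strat ss)))"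
    by (auto simp: set_bind_pmf split: prod.splits)
  have "ss \<noteq> []" using Suc.IH[OF h] by simp
  then show ?case using hh by (auto split: if_splits)
qed

lemma run_Suc_integral:
  "(\<integral>\<^sup>+hh. F hh \<partial>measure_pmf (ghost_run adj K strat s0 (Suc n))) =
   (\<integral>\<^sup>+hh. (if gterminal K (last (fst hh)) then F hh
      else \<integral>\<^sup>+s'. F (fst hh @ [s'], snd hh @ [strat (fst hh)]) \<partial>measure_pmf (gstep adj K (last (fst hh)) (strat (fst hh))))
     \<partial>measure_pmf (ghost_run adj K strat s0 n))"
  by (simp add: case_prod_beta) (rule nn_integral_cong, auto)

lemma terminal_pot: "gterminal K s \<Longrightarrow> pot K f s = 0"
  by (cases s) (auto simp: gterminal_def pot_def)

lemma jumps_snoc: "jumps_from y (ms @ [mv]) = jumps_from y ms + (if gmove_loc mv = y then 1 else 0)"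
  by (simp add: jumps_from_def)

context sgraph begin

lemma claimA:
  assumes K: "finite K" and y: "y \<in> K" and adm: "admissible_strategy K strat"
  shows "(\<integral>\<^sup>+hh. pot K (\<lambda>x. greenK adj K x y) (last (fst hh)) + of_nat (jumps_from y (snd hh))
           \<partial>measure_pmf (ghost_run adj K strat s0 n)) = pot K (\<lambda>x. greenK adj K x y) s0"
proof (induction n)
  case 0 then show ?case by (simp add: jumps_from_def)
next
  case (Suc n)
  let ?h = "\<lambda>x. greenK adj K x y"
  let ?F = "\<lambda>hh. pot K ?h (last (fst hh)) + of_nat (jumps_from y (snd hh))"
  have step: "(if gterminal K (last (fst hh)) then ?F hh
      else \<integral>\<^sup>+s'. ?F (fst hh @ [s'], snd hh @ [strat (fst hh)]) \<partial>measure_pmf (gstep adj K (last (fst hh)) (strat (fst hh))))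
      = ?F hh" if hh: "hh \<in> set_pmf (ghost_run adj K strat s0 n)" for hh
  proof (cases "gterminal K (last (fst hh))")
    case False
    let ?ss = "fst hh" and ?ms = "snd hh"
    let ?s = "last ?ss" and ?mv = "strat ?ss"
    let ?b = "gmove_loc ?mv"
    have v: "gvalid K ?s ?mv" using adm False run_nonempty[OF hh] unfolding admissible_strategy_def by blast
    have bK: "?b \<in> K" using v by (cases ?s; cases ?mv) auto
    have fz: "\<And>x. x \<notin> K \<Longrightarrow> ?h x = 0" using green_out[OF y] by blast
    have fc: "\<And>x. ?h x \<le> \<top>" by simp
    note gp = gstep_pot[OF v K fz fc]
    have "(\<integral>\<^sup>+s'. ?F (?ss @ [s'], ?ms @ [?mv]) \<partial>measure_pmf (gstep adj K ?s ?mv))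
       = (\<integral>\<^sup>+s'. pot K ?h s' + (of_nat (jumps_from y ?ms) + (if ?b = y then 1 else 0)) \<partial>measure_pmf (gstep adj K ?s ?mv))"
      by (intro nn_integral_cong) (simp add: jumps_snoc)
    also have "\<dots> = Rpot K ?h ?s ?b + avgN ?h ?b + (of_nat (jumps_from y ?ms) + (if ?b = y then 1 else 0))"
      by (subst nn_integral_add) (auto simp: gp(2) measure_pmf.emeasure_space_1)
    also have "\<dots> = Rpot K ?h ?s ?b + ?h ?b + of_nat (jumps_from y ?ms)"
      using green_rec[OF y, of ?b] bK by (simp add: ac_simps)
    also have "\<dots> = ?F hh" using gp(1) by simp
    finally show ?thesis using False by simp
  qed simp
  have "(\<integral>\<^sup>+hh. ?F hh \<partial>measure_pmf (ghost_run adj K strat s0 (Suc n))) =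
        (\<integral>\<^sup>+hh. ?F hh \<partial>measure_pmf (ghost_run adj K strat s0 n))"
    unfolding run_Suc_integral
    by (rule nn_integral_cong_AE) (simp add: AE_measure_pmf_iff step)
  then show ?case using Suc.IH by simp
qed

end


context sgraph begin

lemma W_step:
  assumes v: "gvalid K s mv" and K: "finite K" and fz: "\<And>x. x \<notin> K \<Longrightarrow> f x = 0"
    and fc: "\<And>x. f x \<le> c" and frec: "\<And>b. b \<in> K \<Longrightarrow> f b = 1 + avgN f b"
  shows "(\<integral>\<^sup>+s'. (pot K f s')^2 + ((2*c)^2 + 2*c) * pot K f s' \<partial>measure_pmf (gstep adj K s mv))
          + 2 * pot K f s \<le> (pot K f s)^2 + ((2*c)^2 + 2*c) * pot K f s"
proof -
  let ?b = "gmove_loc mv"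
  define R where "R = Rpot K f s ?b"
  define A where "A = avgN f ?b"
  define B where "B = f ?b"
  define C where "C = (2*c)^2 + 2*c"
  note gp = gstep_pot[OF v K fz fc]
  have bK: "?b \<in> K" using v by (cases s; cases mv) auto
  have BA: "B = 1 + A" unfolding A_def B_def using frec[OF bK] .
  have Bc: "B \<le> c" unfolding B_def by (rule fc)
  have ps: "pot K f s = R + B" using gp(1) by (simp add: R_def B_def)
  have "(\<integral>\<^sup>+s'. (pot K f s')^2 + C * pot K f s' \<partial>measure_pmf (gstep adj K s mv))
      = (\<integral>\<^sup>+s'. (pot K f s')^2 \<partial>measure_pmf (gstep adj K s mv)) + C * (R + A)"
    by (simp add: nn_integral_add nn_integral_cmult gp(2) R_def A_def)
  also have "\<dots> \<le> R^2 + 2*R*A + (2*c)^2 + C * (R + A)"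
    using gp(3) by (intro add_right_mono) (simp add: R_def A_def)
  finally have E: "(\<integral>\<^sup>+s'. (pot K f s')^2 + C * pot K f s' \<partial>measure_pmf (gstep adj K s mv))
      \<le> R^2 + 2*R*A + (2*c)^2 + C * (R + A)" .
  let ?X = "R^2 + 2*R + 2*R*A + C*R + C*A"
  have L: "R^2 + 2*R*A + (2*c)^2 + C * (R + A) + 2 * (R + B) = ?X + ((2*c)^2 + 2*B)"
    by (simp add: algebra_simps)
  have Rt: "(R + B)^2 + C * (R + B) = ?X + (B^2 + C)"
  proof -
    have "(R + B)^2 = R^2 + 2*R*B + B^2" using power2_sum[of R B] by (simp only: ac_simps)
    moreover have "2*R*B = 2*R + 2*R*A" by (simp add: BA algebra_simps)
    moreover have "C * (R + B) = C*R + C + C*A" by (simp add: BA algebra_simps)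
    ultimately show ?thesis by (simp only: ac_simps)
  qed
  have "(2*c)^2 + 2*B \<le> B^2 + C"
  proof -
    have "(2*c)^2 + 2*B \<le> (2*c)^2 + 2*c" using Bc by (intro add_left_mono mult_left_mono) auto
    also have "\<dots> \<le> B^2 + C" unfolding C_def by simp
    finally show ?thesis .
  qed
  then have "R^2 + 2*R*A + (2*c)^2 + C * (R + A) + 2 * (R + B) \<le> (R + B)^2 + C * (R + B)"
    unfolding L Rt by (rule add_left_mono)
  then show ?thesis using E unfolding ps C_def[symmetric]
    by (meson add_right_mono order_trans)
qed

lemma claimB:
  assumes K: "finite K" and adm: "admissible_strategy K strat" and fz: "\<And>x. x \<notin> K \<Longrightarrow> f x = 0"
    and fc: "\<And>x. f x \<le> c" and frec: "\<And>b. b \<in> K \<Longrightarrow> f b = 1 + avgN f b"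
  shows "(\<integral>\<^sup>+hh. (pot K f (last (fst hh)))^2 + ((2*c)^2 + 2*c) * pot K f (last (fst hh))
            \<partial>measure_pmf (ghost_run adj K strat s0 n))
         + 2 * (\<Sum>t<n. \<integral>\<^sup>+hh. pot K f (last (fst hh)) \<partial>measure_pmf (ghost_run adj K strat s0 t))
         \<le> (pot K f s0)^2 + ((2*c)^2 + 2*c) * pot K f s0"
proof (induction n)
  case 0 then show ?case by simp
next
  case (Suc n)
  define C where "C = (2*c)^2 + 2*c"
  let ?W = "\<lambda>s. (pot K f s)^2 + C * pot K f s"
  let ?P = "\<lambda>hh. pot K f (last (fst hh))"
  let ?\<mu> = "\<lambda>t. measure_pmf (ghost_run adj K strat s0 t)"
  have pw: "(if gterminal K (last (fst hh)) then ?W (last (fst hh))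
      else \<integral>\<^sup>+s'. ?W (last (fst hh @ [s'])) \<partial>measure_pmf (gstep adj K (last (fst hh)) (strat (fst hh))))
      + 2 * ?P hh \<le> ?W (last (fst hh))" if hh: "hh \<in> set_pmf (ghost_run adj K strat s0 n)" for hh
  proof (cases "gterminal K (last (fst hh))")
    case True then show ?thesis by (simp add: terminal_pot)
  next
    case False
    have v: "gvalid K (last (fst hh)) (strat (fst hh))"
      using adm False run_nonempty[OF hh] unfolding admissible_strategy_def by blast
    show ?thesis using False W_step[OF v K fz fc frec] by (simp add: C_def)
  qed
  have "(\<integral>\<^sup>+hh. ?W (last (fst hh)) \<partial>?\<mu> (Suc n)) + 2 * (\<integral>\<^sup>+hh. ?P hh \<partial>?\<mu> n)
      = (\<integral>\<^sup>+hh. (if gterminal K (last (fst hh)) then ?W (last (fst hh))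
      else \<integral>\<^sup>+s'. ?W (last (fst hh @ [s'])) \<partial>measure_pmf (gstep adj K (last (fst hh)) (strat (fst hh))))
      + 2 * ?P hh \<partial>?\<mu> n)"
    unfolding run_Suc_integral fst_conv by (simp add: nn_integral_add nn_integral_cmult)
  also have "\<dots> \<le> (\<integral>\<^sup>+hh. ?W (last (fst hh)) \<partial>?\<mu> n)"
    by (rule nn_integral_mono_AE) (simp add: AE_measure_pmf_iff pw)
  finally have st: "(\<integral>\<^sup>+hh. ?W (last (fst hh)) \<partial>?\<mu> (Suc n)) + 2 * (\<integral>\<^sup>+hh. ?P hh \<partial>?\<mu> n)
      \<le> (\<integral>\<^sup>+hh. ?W (last (fst hh)) \<partial>?\<mu> n)" .
  have "(\<integral>\<^sup>+hh. ?W (last (fst hh)) \<partial>?\<mu> (Suc n)) + 2 * (\<Sum>t<Suc n. \<integral>\<^sup>+hh. ?P hh \<partial>?\<mu> t)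
     = ((\<integral>\<^sup>+hh. ?W (last (fst hh)) \<partial>?\<mu> (Suc n)) + 2 * (\<integral>\<^sup>+hh. ?P hh \<partial>?\<mu> n))
       + 2 * (\<Sum>t<n. \<integral>\<^sup>+hh. ?P hh \<partial>?\<mu> t)"
    by (simp add: distrib_left ac_simps)
  also have "\<dots> \<le> (\<integral>\<^sup>+hh. ?W (last (fst hh)) \<partial>?\<mu> n) + 2 * (\<Sum>t<n. \<integral>\<^sup>+hh. ?P hh \<partial>?\<mu> t)"
    by (rule add_right_mono[OF st])
  also have "\<dots> \<le> ?W s0" using Suc.IH by (simp add: C_def)
  finally show ?case by (simp add: C_def)
qed

end


lemma exists_small:
  fixes a :: "nat \<Rightarrow> ennreal"
  assumes S: "\<And>n. (\<Sum>t<n. a t) \<le> W" and W: "W < \<top>" and e: "0 < e"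
  shows "\<exists>n. a n \<le> ennreal e"
proof (rule ccontr)
  assume "\<not> ?thesis"
  then have lt: "\<And>n. ennreal e \<le> a n" by (meson linear)
  obtain w where w: "0 \<le> w" "W = ennreal w" using W less_top_ennreal by blast
  define N where "N = Suc (nat \<lceil>w / e\<rceil>)"
  have "ennreal (real N * e) = (\<Sum>t<N. ennreal e)"
    using e by (simp add: ennreal_mult ennreal_of_nat_eq_real_of_nat)
  also have "\<dots> \<le> (\<Sum>t<N. a t)" by (intro sum_mono lt)
  also have "\<dots> \<le> ennreal w" using S w by simp
  finally have "real N * e \<le> w" using w by (simp add: ennreal_le_iff)
  moreover have "w < real N * e"
  proof -
    have "w / e < real N" unfolding N_def by linarith
    then show ?thesis using e by (simp add: divide_less_eq)
  qed
  ultimately show False by simp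
qed

theorem lemma3p3:
  fixes adj :: "'v \<Rightarrow> 'v \<Rightarrow> bool"
    and K :: "'v set" and y :: 'v
    and eo ew :: "'v \<Rightarrow> nat"
    and strat :: "'v gstate list \<Rightarrow> 'v gmove"
  assumes "infinite_vt_graph_finite_degree adj"
    and "finite K" and "y \<in> K"
    and "unstable_config eo ew"
    and "admissible_strategy K strat"
  shows "ghost_expected_jumps adj K strat eo ew y =
           (\<Sum>x\<in>K. of_nat (min (eo x) (ew x)) * greenK adj K x y)"
proof -
  note G = assms(1)[unfolded infinite_vt_graph_finite_degree_def]
  have K: "finite K" and y: "y \<in> K" and adm: "admissible_strategy K strat" using assms by auto
  have irr: "\<And>v. \<not> adj v v" and conn: "\<And>a b. adj\<^sup>*\<^sup>* a b" and inf: "infinite (UNIV :: 'v set)"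
    and fin: "\<And>v. finite (nbrs adj v)" using G by auto
  have ne: "nbrs adj v \<noteq> {}" for v
  proof -
    obtain w where w: "w \<notin> {v}" using ex_new_if_finite[OF inf, of "{v}"] by auto
    have "adj\<^sup>*\<^sup>* v w" by (rule conn)
    then show ?thesis
    proof (cases rule: converse_rtranclpE)
      case base then show ?thesis using w by simp
    next
      case (step v') then show ?thesis by (auto simp: nbrs_def)
    qed
  qed
  interpret sgraph adj using fin ne irr by unfold_locales auto
  define h where "h = (\<lambda>x. greenK adj K x y)"
  define H where "H = (\<lambda>x. \<Sum>y'\<in>K. greenK adj K x y')"
  have gfin: "greenK adj K x y' < \<top>" if "y' \<in> K" for x y'
    by (rule green_finite[OF K that conn inf])
  have Hfin: "H x < \<top>" for x unfolding H_def using gfin K by simp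
  have Hz: "H x = 0" if "x \<notin> K" for x unfolding H_def using green_out that by simp
  have Hrec: "H b = 1 + avgN H b" if b: "b \<in> K" for b
  proof -
    have "H b = (\<Sum>y'\<in>K. (if b = y' then 1 else 0) + avgN (\<lambda>z. greenK adj K z y') b)"
      unfolding H_def using b by (intro sum.cong refl) (subst green_rec, auto)
    also have "\<dots> = 1 + avgN H b"
      unfolding H_def using K b by (simp add: sum.distrib avgN_sum)
    finally show ?thesis .
  qed
  define c where "c = (\<Sum>x\<in>K. H x)"
  have Hc: "H x \<le> c" for x
  proof (cases "x \<in> K")
    case True then show ?thesis unfolding c_def using K by (intro member_le_sum) auto
  qed (simp add: Hz)
  have cfin: "c < \<top>" unfolding c_def using K Hfin by simp
  have hH: "h x \<le> H x" for x unfolding h_def H_def using K y by (intro member_le_sum) auto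
  define s0 :: "'v gstate" where "s0 = (eo, ew, \<lambda>_. 0)"
  define \<mu> where "\<mu> = (\<lambda>n. measure_pmf (ghost_run adj K strat s0 n))"
  define Em where "Em = (\<lambda>n. \<integral>\<^sup>+hh. of_nat (jumps_from y (snd hh)) \<partial>\<mu> n)"
  define EPhi where "EPhi = (\<lambda>n. \<integral>\<^sup>+hh. pot K h (last (fst hh)) \<partial>\<mu> n)"
  define EPsi where "EPsi = (\<lambda>n. \<integral>\<^sup>+hh. pot K H (last (fst hh)) \<partial>\<mu> n)"
  define W0 where "W0 = (pot K H s0)^2 + ((2*c)^2 + 2*c) * pot K H s0"
  have A: "Em n + EPhi n = pot K h s0" for n
    using claimA[OF K y adm, of s0 n] unfolding Em_def EPhi_def \<mu>_def h_def
    by (subst (asm) nn_integral_add) (auto simp: add.commute)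
  have B: "(\<Sum>t<n. EPsi t) \<le> W0" for n
  proof -
    have "(\<Sum>t<n. EPsi t) \<le> 2 * (\<Sum>t<n. EPsi t)" by (simp add: mult_2)
    also have "\<dots> \<le> (\<integral>\<^sup>+hh. (pot K H (last (fst hh)))^2 + ((2*c)^2 + 2*c) * pot K H (last (fst hh)) \<partial>\<mu> n)
         + 2 * (\<Sum>t<n. EPsi t)" by simp
    also have "\<dots> \<le> W0"
      using claimB[OF K adm Hz Hc Hrec, of s0 n] unfolding W0_def EPsi_def \<mu>_def by simp
    finally show ?thesis .
  qed
  have potfin: "pot K H s0 < \<top>" unfolding pot_def using K Hfin
    by (simp add: ennreal_mult_less_top of_nat_less_top)
  have W0fin: "W0 < \<top>" unfolding W0_def using potfin cfin
    by (simp add: ennreal_mult_less_top power_less_top_ennreal)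
  have PhiPsi: "EPhi n \<le> EPsi n" for n
    unfolding EPhi_def EPsi_def pot_def
    by (intro nn_integral_mono sum_mono mult_left_mono hH) auto
  have lhs: "ghost_expected_jumps adj K strat eo ew y = (SUP n. Em n)"
    unfolding ghost_expected_jumps_def Em_def \<mu>_def s0_def ..
  have rhs: "(\<Sum>x\<in>K. of_nat (min (eo x) (ew x)) * greenK adj K x y) = pot K h s0"
    unfolding pot_def s0_def h_def by simp
  show ?thesis unfolding lhs rhs
  proof (rule antisym)
    show "(SUP n. Em n) \<le> pot K h s0"
    proof (rule SUP_least)
      fix n
      have "Em n \<le> Em n + EPhi n" by simp
      then show "Em n \<le> pot K h s0" by (simp add: A)
    qed
    show "pot K h s0 \<le> (SUP n. Em n)"
    proof (rule ennreal_le_epsilon)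
      fix e :: real assume e: "0 < e"
      obtain n where n: "EPsi n \<le> ennreal e" using exists_small[OF B W0fin e] by blast
      have "pot K h s0 = Em n + EPhi n" by (simp add: A)
      also have "\<dots> \<le> (SUP n. Em n) + ennreal e"
        by (intro add_mono SUP_upper order_trans[OF PhiPsi n]) auto
      finally show "pot K h s0 \<le> (SUP n. Em n) + ennreal e" .
    qed
  qed
qed


end
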